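(* For any positive integers $r$ and $\ell$ there exists an integer $\delta=\delta(r,\ell)$ such that the following holds. Let $G$ be a bipartite graph with bipartition $(X,Y)$ such that $X$ contains no pair of twins and $\eta_G(m)\le r\cdot m$ for every positive integer $m$. Then for every $Y'\subseteq Y$ with $|Y'|\ge\max\{2,|Y|/\ell\}$ there exist distinct vertices $u,v\in Y'$ which are $\delta$-near-twins in $G$.
   Context: $N(v)$ is the open neighborhood of $v$. The neighborhood complexity of $G$ is $\eta_G(m)=\max_A|\{N(v)\cap A: v\in V(G)\}|$ over all $m$-element subsets $A\subseteq V(G)$. Two vertices $u,v$ are twins if $N(u)=N(v)$, and are $\delta$-near-twins if $|N(u)\,\Delta\,N(v)|\le\delta$, where $\Delta$ is symmetric difference. *)

theory Defs
  imports Complex_Main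
begin

definition nbhd :: "('a \<Rightarrow> 'a \<Rightarrow> bool) \<Rightarrow> 'a \<Rightarrow> 'a set" where
  "nbhd E v = {u. E v u}"

definition bipartite_graph ::
  "'a set \<Rightarrow> ('a \<Rightarrow> 'a \<Rightarrow> bool) \<Rightarrow> 'a set \<Rightarrow> 'a set \<Rightarrow> bool" where
  "bipartite_graph V E X Y \<longleftrightarrow>
     finite V \<and>
     (\<forall>u v. E u v \<longrightarrow> u \<in> V \<and> v \<in> V \<and> u \<noteq> v \<and> E v u) \<and>
     X \<union> Y = V \<and> X \<inter> Y = {} \<and>
     (\<forall>u v. E u v \<longrightarrow> (u \<in> X \<and> v \<in> Y) \<or> (u \<in> Y \<and> v \<in> X))"

text \<open>Neighborhood complexity: maximum over m-element subsets A of V of the number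
of distinct traces N(v) \<inter> A, v \<in> V (taken to be 0 if there is no such A).\<close>

definition nbhd_complexity :: "'a set \<Rightarrow> ('a \<Rightarrow> 'a \<Rightarrow> bool) \<Rightarrow> nat \<Rightarrow> nat" where
  "nbhd_complexity V E m =
     Max ({card ((\<lambda>v. nbhd E v \<inter> A) ` V) | A. A \<subseteq> V \<and> card A = m} \<union> {0})"

definition twins :: "('a \<Rightarrow> 'a \<Rightarrow> bool) \<Rightarrow> 'a \<Rightarrow> 'a \<Rightarrow> bool" where
  "twins E u v \<longleftrightarrow> nbhd E u = nbhd E v"

definition near_twins :: "('a \<Rightarrow> 'a \<Rightarrow> bool) \<Rightarrow> nat \<Rightarrow> 'a \<Rightarrow> 'a \<Rightarrow> bool" where
  "near_twins E \<delta> u v \<longleftrightarrow>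
     card ((nbhd E u - nbhd E v) \<union> (nbhd E v - nbhd E u)) \<le> \<delta>"

end

theory Submission
  imports Defs
begin


definition shatters :: "'a set set \<Rightarrow> 'a set \<Rightarrow> bool" where
  "shatters G B \<longleftrightarrow> (\<forall>C\<subseteq>B. \<exists>T\<in>G. T \<inter> B = C)"

definition edir :: "'a set set \<Rightarrow> 'a \<Rightarrow> 'a set set" where
  "edir G z = {T\<in>G. z \<notin> T \<and> insert z T \<in> G}"

definition edges :: "'a set \<Rightarrow> 'a set set \<Rightarrow> nat" where
  "edges A G = (\<Sum>z\<in>A. card (edir G z))"

lemma edir_split:
  assumes fin: "finite G" and z: "z \<noteq> x"
  shows "card (edir G z) \<le> card (edir ((\<lambda>T. T - {x}) ` G) z) +
     card (edir {T\<in>G. x \<notin> T \<and> insert x T \<in> G} z)"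
proof -
  let ?f = "\<lambda>T. T - {x}"
  let ?G' = "?f ` G"
  let ?G'' = "{T\<in>G. x \<notin> T \<and> insert x T \<in> G}"
  define E0 where "E0 = {T\<in>edir G z. x \<notin> T}"
  define E1 where "E1 = {T\<in>edir G z. x \<in> T}"
  have fe: "finite (edir G z)" using fin unfolding edir_def by auto
  have "edir G z = E0 \<union> E1" "E0 \<inter> E1 = {}" unfolding E0_def E1_def by auto
  hence c: "card (edir G z) = card E0 + card E1"
    using fe by (metis card_Un_disjoint finite_Un)
  have i0: "inj_on ?f E0" unfolding E0_def inj_on_def by auto
  have i1: "inj_on ?f E1" unfolding E1_def inj_on_def by (metis insert_Diff mem_Collect_eq)
  have s0: "?f ` E0 \<subseteq> edir ?G' z"
  proof
    fix U assume "U \<in> ?f ` E0"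
    then obtain T where T: "T \<in> E0" "U = T - {x}" by auto
    hence "U = T" "T \<in> G" "z \<notin> T" "insert z T \<in> G" "x \<notin> T" unfolding E0_def edir_def by auto
    moreover have "insert z T = ?f (insert z T)" using \<open>x \<notin> T\<close> z by auto
    moreover have "T = ?f T" using \<open>x \<notin> T\<close> by auto
    ultimately have "U \<in> ?G'" "insert z U \<in> ?G'" "z \<notin> U" by (metis image_eqI)+
    thus "U \<in> edir ?G' z" unfolding edir_def by auto
  qed
  have s1: "?f ` E1 \<subseteq> edir ?G' z"
  proof
    fix U assume "U \<in> ?f ` E1"
    then obtain T where T: "T \<in> E1" "U = T - {x}" by auto
    hence "T \<in> G" "z \<notin> T" "insert z T \<in> G" "x \<in> T" unfolding E1_def edir_def by auto
    moreover have "insert z U = ?f (insert z T)" using T z by auto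
    ultimately show "U \<in> edir ?G' z" unfolding edir_def using T by auto
  qed
  have s2: "?f ` E0 \<inter> ?f ` E1 \<subseteq> edir ?G'' z"
  proof
    fix U assume "U \<in> ?f ` E0 \<inter> ?f ` E1"
    then obtain T0 T1 where T: "T0 \<in> E0" "U = T0 - {x}" "T1 \<in> E1" "U = T1 - {x}" by blast
    hence h: "T0 \<in> G" "z \<notin> T0" "insert z T0 \<in> G" "x \<notin> T0"
       "T1 \<in> G" "z \<notin> T1" "insert z T1 \<in> G" "x \<in> T1" unfolding E0_def E1_def edir_def by auto
    have "U = T0" using T h by auto
    have "T1 = insert x U" using T h by auto
    have "insert x (insert z U) = insert z T1" using \<open>T1 = insert x U\<close> by auto
    show "U \<in> edir ?G'' z" unfolding edir_def
      using h \<open>U = T0\<close> \<open>T1 = insert x U\<close> \<open>insert x (insert z U) = insert z T1\<close> z by auto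
  qed
  have fG': "finite (edir ?G' z)" using fin unfolding edir_def by auto
  have fG'': "finite (edir ?G'' z)" using fin unfolding edir_def by auto
  have "card E0 + card E1 = card (?f ` E0) + card (?f ` E1)"
    using i0 i1 by (simp add: card_image)
  also have "\<dots> = card (?f ` E0 \<union> ?f ` E1) + card (?f ` E0 \<inter> ?f ` E1)"
  proof -
    have "finite E0" "finite E1" using fe unfolding E0_def E1_def by auto
    thus ?thesis using card_Un_Int[of "?f ` E0" "?f ` E1"] by auto
  qed
  also have "\<dots> \<le> card (edir ?G' z) + card (edir ?G'' z)"
    using s0 s1 s2 fG' fG'' by (intro add_mono card_mono) auto
  finally show ?thesis using c by simp
qed

lemma shatter_proj:
  assumes "x \<notin> B" "shatters ((\<lambda>T. T - {x}) ` G) B"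
  shows "shatters G B"
  unfolding shatters_def
proof (intro allI impI)
  fix C assume "C \<subseteq> B"
  hence "\<exists>T\<in>G. (T - {x}) \<inter> B = C" using assms(2) unfolding shatters_def by auto
  then obtain T where "T \<in> G" "(T - {x}) \<inter> B = C" by (elim bexE)
  define U where "U = T - {x}"
  have "U \<inter> B = C" "U = T - {x}" using \<open>(T - {x}) \<inter> B = C\<close> U_def by auto
  hence "T \<inter> B = U \<inter> B" using assms(1) by auto
  thus "\<exists>T\<in>G. T \<inter> B = C" using \<open>T \<in> G\<close> \<open>U \<inter> B = C\<close> by auto
qed

lemma shatter_up:
  assumes "x \<notin> B" "shatters {T\<in>G. x \<notin> T \<and> insert x T \<in> G} B"
  shows "shatters G (insert x B)"
  unfolding shatters_def
proof (intro allI impI)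
  fix C assume C: "C \<subseteq> insert x B"
  hence "C - {x} \<subseteq> B" by auto
  hence "\<exists>U\<in>{T\<in>G. x \<notin> T \<and> insert x T \<in> G}. U \<inter> B = C - {x}"
    using assms(2) unfolding shatters_def by blast
  then obtain U where U: "U \<in> G" "x \<notin> U" "insert x U \<in> G" "U \<inter> B = C - {x}"
    by (elim bexE) auto
  show "\<exists>T\<in>G. T \<inter> insert x B = C"
  proof (cases "x \<in> C")
    case True
    have "insert x U \<inter> insert x B = C" using U True C by auto
    thus ?thesis using U by blast
  next
    case False
    have "U \<inter> insert x B = C" using U False C by auto
    thus ?thesis using U by blast
  qed
qed

lemma card_split_x:
  assumes finG: "finite G"
  shows "card G = card ((\<lambda>T. T - {x}) ` G) + card {T\<in>G. x \<notin> T \<and> insert x T \<in> G}"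
proof -
  let ?f = "\<lambda>T. T - {x}"
  define G0 where "G0 = {T\<in>G. x \<notin> T}"
  define G1 where "G1 = {T\<in>G. x \<in> T}"
  have GU: "G = G0 \<union> G1" "G0 \<inter> G1 = {}" unfolding G0_def G1_def by auto
  hence c: "card G = card G0 + card G1" using finG by (metis card_Un_disjoint finite_Un)
  have i0: "inj_on ?f G0" unfolding G0_def inj_on_def by auto
  have i1: "inj_on ?f G1" unfolding G1_def inj_on_def by (metis insert_Diff mem_Collect_eq)
  have e1: "?f ` G = ?f ` G0 \<union> ?f ` G1" using GU(1) by (metis image_Un)
  have e2: "{T\<in>G. x \<notin> T \<and> insert x T \<in> G} = ?f ` G0 \<inter> ?f ` G1"
  proof
    show "{T\<in>G. x \<notin> T \<and> insert x T \<in> G} \<subseteq> ?f ` G0 \<inter> ?f ` G1"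
    proof
      fix U assume U: "U \<in> {T\<in>G. x \<notin> T \<and> insert x T \<in> G}"
      hence "U = ?f U" "U \<in> G0" "insert x U \<in> G1" "U = ?f (insert x U)"
        unfolding G0_def G1_def by auto
      thus "U \<in> ?f ` G0 \<inter> ?f ` G1" by blast
    qed
  next
    show "?f ` G0 \<inter> ?f ` G1 \<subseteq> {T\<in>G. x \<notin> T \<and> insert x T \<in> G}"
    proof
      fix U assume "U \<in> ?f ` G0 \<inter> ?f ` G1"
      then obtain T0 T1 where T: "T0 \<in> G0" "U = T0 - {x}" "T1 \<in> G1" "U = T1 - {x}" by blast
      hence "U = T0" "T1 = insert x U" unfolding G0_def G1_def by auto
      thus "U \<in> {T\<in>G. x \<notin> T \<and> insert x T \<in> G}" using T unfolding G0_def G1_def by auto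
    qed
  qed
  have "finite G0" "finite G1" using finG unfolding G0_def G1_def by auto
  hence "card (?f ` G0 \<union> ?f ` G1) + card (?f ` G0 \<inter> ?f ` G1) = card (?f ` G0) + card (?f ` G1)"
    using card_Un_Int[of "?f ` G0" "?f ` G1"] by auto
  thus ?thesis using c i0 i1 e1 e2 by (simp add: card_image)
qed

lemma edge_bound:
  assumes "finite A"
  shows "G \<subseteq> Pow A \<Longrightarrow> (\<forall>B\<subseteq>A. shatters G B \<longrightarrow> card B \<le> d) \<Longrightarrow> edges A G \<le> d * card G"
  using assms
proof (induction A arbitrary: G d rule: finite_induct)
  case empty
  then show ?case by (simp add: edges_def)
next
  case (insert x A0)
  let ?f = "\<lambda>T. T - {x}"
  let ?G' = "?f ` G"
  let ?G'' = "{T\<in>G. x \<notin> T \<and> insert x T \<in> G}"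
  have finG: "finite G" using insert.prems(1) insert.hyps(1)
    by (meson finite_Pow_iff finite_insert rev_finite_subset)
  have G'sub: "?G' \<subseteq> Pow A0" using insert.prems(1) by auto
  have G''sub: "?G'' \<subseteq> Pow A0"
  proof
    fix T assume T: "T \<in> ?G''"
    hence "T \<subseteq> insert x A0" "x \<notin> T" using insert.prems(1) by auto
    thus "T \<in> Pow A0" by auto
  qed
  have sh': "\<forall>B\<subseteq>A0. shatters ?G' B \<longrightarrow> card B \<le> d"
  proof (intro allI impI)
    fix B assume B: "B \<subseteq> A0" "shatters ?G' B"
    have "x \<notin> B" using B insert.hyps(2) by auto
    hence "shatters G B" using shatter_proj B(2) by metis
    moreover have "B \<subseteq> insert x A0" using B by auto
    ultimately show "card B \<le> d" using insert.prems(2) by auto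
  qed
  have sh'': "\<forall>B\<subseteq>A0. shatters ?G'' B \<longrightarrow> card B \<le> d - 1"
  proof (intro allI impI)
    fix B assume B: "B \<subseteq> A0" "shatters ?G'' B"
    have xB: "x \<notin> B" using B insert.hyps(2) by auto
    hence "shatters G (insert x B)" using shatter_up B(2) by metis
    moreover have "insert x B \<subseteq> insert x A0" using B by auto
    ultimately have "card (insert x B) \<le> d" using insert.prems(2) by auto
    moreover have "finite B" using B insert.hyps(1) finite_subset by auto
    hence "card (insert x B) = card B + 1" using xB by simp
    ultimately show "card B \<le> d - 1" by simp
  qed
  have IH1: "edges A0 ?G' \<le> d * card ?G'" using insert.IH G'sub sh' by blast
  have IH2: "edges A0 ?G'' \<le> (d - 1) * card ?G''" using insert.IH G''sub sh'' by blast
  have d0: "d = 0 \<Longrightarrow> ?G'' = {}"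
  proof (rule ccontr)
    assume "d = 0" "?G'' \<noteq> {}"
    hence "shatters ?G'' {}" unfolding shatters_def by auto
    hence "shatters G (insert x {})" using shatter_up[of x "{}" G] by simp
    moreover have "insert x {} \<subseteq> insert x A0" by simp
    ultimately have "card (insert x {}) \<le> d" using insert.prems(2) by blast
    thus False using \<open>d = 0\<close> by simp
  qed
  have edx: "edir G x = ?G''" unfolding edir_def by auto
  have cardG: "card G = card ?G' + card ?G''" using card_split_x[OF finG] .
  have "edges (insert x A0) G = card ?G'' + (\<Sum>z\<in>A0. card (edir G z))"
    unfolding edges_def using insert.hyps edx by simp
  also have "\<dots> \<le> card ?G'' + (\<Sum>z\<in>A0. card (edir ?G' z) + card (edir ?G'' z))"
  proof (intro add_left_mono sum_mono)
    fix z assume "z \<in> A0"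
    hence "z \<noteq> x" using insert.hyps(2) by auto
    thus "card (edir G z) \<le> card (edir ?G' z) + card (edir ?G'' z)" by (rule edir_split[OF finG])
  qed
  also have "\<dots> = card ?G'' + edges A0 ?G' + edges A0 ?G''"
    unfolding edges_def by (simp add: sum.distrib)
  also have "\<dots> \<le> card ?G'' + d * card ?G' + (d - 1) * card ?G''"
    using IH1 IH2 by simp
  also have "\<dots> \<le> d * card G"
  proof -
    have ar: "a + d * b + (d - 1) * a \<le> d * (b + a)" if "d = 0 \<Longrightarrow> a = 0" for a b :: nat
    proof (cases d)
      case 0 thus ?thesis using that by simp
    next
      case (Suc e) thus ?thesis by (simp add: algebra_simps)
    qed
    have "d = 0 \<Longrightarrow> card ?G'' = 0" using d0 by (metis card.empty)
    from ar[OF this] show ?thesis using cardG by simp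
  qed
  finally show ?case .
qed



lemma cnt: "finite A \<Longrightarrow> card {x\<in>A. Q x} = (\<Sum>x\<in>A. if Q x then 1 else 0::nat)"
  by (simp add: sum.If_cases Collect_conj_eq Int_commute)

lemma shatters_mono: "G \<subseteq> H \<Longrightarrow> shatters G B \<Longrightarrow> shatters H B"
  unfolding shatters_def by (meson subsetD)

definition wt :: "'b set \<Rightarrow> ('b \<Rightarrow> 'a set) \<Rightarrow> 'a set \<Rightarrow> 'a set \<Rightarrow> nat" where
  "wt P S A U = card {y\<in>P. S y \<inter> A = U}"

lemma wt_le: "finite P \<Longrightarrow> wt P S A U \<le> card P"
  unfolding wt_def by (intro card_mono) auto

lemma min_count: "(a::nat) \<le> k \<Longrightarrow> min a b = (\<Sum>t\<in>{1..k}. if t \<le> a \<and> t \<le> b then 1 else 0)"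
proof -
  assume "a \<le> k"
  have "{t\<in>{1..k}. t \<le> a \<and> t \<le> b} = {1..min a b}" using \<open>a \<le> k\<close> by auto
  hence "card {t\<in>{1..k}. t \<le> a \<and> t \<le> b} = min a b" by simp
  thus ?thesis using cnt[of "{1..k}" "\<lambda>t. t \<le> a \<and> t \<le> b"] by simp
qed

lemma count_le: "(a::nat) \<le> k \<Longrightarrow> a = (\<Sum>t\<in>{1..k}. if t \<le> a then 1 else 0)"
proof -
  assume "a \<le> k"
  have "{t\<in>{1..k}. t \<le> a} = {1..a}" using \<open>a \<le> k\<close> by auto
  hence "card {t\<in>{1..k}. t \<le> a} = a" by simp
  thus ?thesis using cnt[of "{1..k}" "\<lambda>t. t \<le> a"] by simp
qed

lemma wt_sum:
  assumes "finite P" "finite A"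
  shows "(\<Sum>U\<in>Pow A. wt P S A U) = card P"
proof -
  have "(\<Sum>U\<in>Pow A. wt P S A U) = (\<Sum>U\<in>Pow A. \<Sum>y\<in>P. if S y \<inter> A = U then 1 else 0)"
    unfolding wt_def using assms cnt by (intro sum.cong) auto
  also have "\<dots> = (\<Sum>y\<in>P. \<Sum>U\<in>Pow A. if S y \<inter> A = U then 1 else 0)"
    by (rule sum.swap)
  also have "\<dots> = (\<Sum>y\<in>P. 1)"
  proof (intro sum.cong refl)
    fix y assume "y \<in> P"
    have "(\<Sum>U\<in>Pow A. if S y \<inter> A = U then 1 else 0) = card {U\<in>Pow A. S y \<inter> A = U}"
      using cnt[of "Pow A" "\<lambda>U. S y \<inter> A = U"] assms by simp
    also have "{U\<in>Pow A. S y \<inter> A = U} = {S y \<inter> A}" by auto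
    finally show "(\<Sum>U\<in>Pow A. if S y \<inter> A = U then 1 else 0) = (1::nat)" by simp
  qed
  finally show ?thesis by simp
qed

lemma upper:
  assumes finP: "finite P" and finA: "finite A"
    and dB: "\<forall>B\<subseteq>A. shatters ((\<lambda>y. S y \<inter> A) ` P) B \<longrightarrow> card B \<le> d"
  shows "(\<Sum>x\<in>A. \<Sum>T\<in>Pow (A - {x}). min (wt P S A (insert x T)) (wt P S A T)) \<le> d * card P"
proof -
  let ?k = "card P"
  let ?w = "wt P S A"
  define G where "G t = {U\<in>Pow A. t \<le> ?w U}" for t
  have "(\<Sum>x\<in>A. \<Sum>T\<in>Pow (A - {x}). min (?w (insert x T)) (?w T)) =
        (\<Sum>x\<in>A. \<Sum>T\<in>Pow (A - {x}). \<Sum>t\<in>{1..?k}. if t \<le> ?w (insert x T) \<and> t \<le> ?w T then 1 else 0)"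
    using min_count wt_le[OF finP] by (intro sum.cong refl) blast
  also have "\<dots> = (\<Sum>x\<in>A. \<Sum>t\<in>{1..?k}. \<Sum>T\<in>Pow (A - {x}). if t \<le> ?w (insert x T) \<and> t \<le> ?w T then 1 else 0)"
    by (intro sum.cong refl sum.swap)
  also have "\<dots> = (\<Sum>t\<in>{1..?k}. \<Sum>x\<in>A. \<Sum>T\<in>Pow (A - {x}). if t \<le> ?w (insert x T) \<and> t \<le> ?w T then 1 else 0)"
    by (rule sum.swap)
  also have "\<dots> = (\<Sum>t\<in>{1..?k}. edges A (G t))"
  proof (intro sum.cong refl)
    fix t assume "t \<in> {1..?k}"
    show "(\<Sum>x\<in>A. \<Sum>T\<in>Pow (A - {x}). if t \<le> ?w (insert x T) \<and> t \<le> ?w T then 1 else 0) = edges A (G t)"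
      unfolding edges_def
    proof (intro sum.cong refl)
      fix x assume "x \<in> A"
      have "edir (G t) x = {T\<in>Pow (A - {x}). t \<le> ?w (insert x T) \<and> t \<le> ?w T}"
        unfolding edir_def G_def using \<open>x \<in> A\<close> by auto
      moreover have "finite (Pow (A - {x}))" using finA by simp
      ultimately show "(\<Sum>T\<in>Pow (A - {x}). if t \<le> ?w (insert x T) \<and> t \<le> ?w T then 1 else 0) = card (edir (G t) x)"
        using cnt by metis
    qed
  qed
  also have "\<dots> \<le> (\<Sum>t\<in>{1..?k}. d * card (G t))"
  proof (intro sum_mono)
    fix t assume t: "t \<in> {1..?k}"
    have sub: "G t \<subseteq> (\<lambda>y. S y \<inter> A) ` P"
    proof
      fix U assume "U \<in> G t"
      hence "1 \<le> ?w U" using t unfolding G_def by auto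
      hence "{y\<in>P. S y \<inter> A = U} \<noteq> {}" unfolding wt_def by (metis card.empty not_one_le_zero)
      thus "U \<in> (\<lambda>y. S y \<inter> A) ` P" by auto
    qed
    show "edges A (G t) \<le> d * card (G t)"
    proof (rule edge_bound[OF finA])
      show "G t \<subseteq> Pow A" unfolding G_def by auto
      show "\<forall>B\<subseteq>A. shatters (G t) B \<longrightarrow> card B \<le> d"
        using dB shatters_mono[OF sub] by blast
    qed
  qed
  also have "\<dots> = d * (\<Sum>t\<in>{1..?k}. \<Sum>U\<in>Pow A. if t \<le> ?w U then 1 else 0)"
  proof -
    have "card (G t) = (\<Sum>U\<in>Pow A. if t \<le> ?w U then 1 else 0)" for t
      unfolding G_def using cnt[of "Pow A" "\<lambda>U. t \<le> ?w U"] finA by (simp only: finite_Pow_iff)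
    thus ?thesis by (simp add: sum_distrib_left)
  qed
  also have "\<dots> = d * (\<Sum>U\<in>Pow A. \<Sum>t\<in>{1..?k}. if t \<le> ?w U then 1 else 0)"
    by (subst sum.swap) rule
  also have "\<dots> = d * (\<Sum>U\<in>Pow A. ?w U)"
    using count_le[OF wt_le[OF finP]] by (intro arg_cong[where f="(*) d"] sum.cong refl) (rule sym)
  also have "\<dots> = d * ?k" using wt_sum[OF finP finA] by simp
  finally show ?thesis .
qed



definition gsum :: "'b set \<Rightarrow> ('b \<Rightarrow> 'a set) \<Rightarrow> 'a set \<Rightarrow> 'a \<Rightarrow> nat" where
  "gsum P S I x = (\<Sum>T\<in>Pow I. min (card {y\<in>P. S y \<inter> I = T \<and> x \<in> S y}) (card {y\<in>P. S y \<inter> I = T \<and> x \<notin> S y}))"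

lemma gsum_wt:
  assumes "x \<in> A"
  shows "gsum P S (A - {x}) x = (\<Sum>T\<in>Pow (A - {x}). min (wt P S A (insert x T)) (wt P S A T))"
  unfolding gsum_def
proof (intro sum.cong refl)
  fix T assume T: "T \<in> Pow (A - {x})"
  have "{y\<in>P. S y \<inter> (A - {x}) = T \<and> x \<in> S y} = {y\<in>P. S y \<inter> A = insert x T}"
    using T assms by auto
  moreover have "{y\<in>P. S y \<inter> (A - {x}) = T \<and> x \<notin> S y} = {y\<in>P. S y \<inter> A = T}"
    using T assms by auto
  ultimately show "min (card {y\<in>P. S y \<inter> (A - {x}) = T \<and> x \<in> S y}) (card {y\<in>P. S y \<inter> (A - {x}) = T \<and> x \<notin> S y})
     = min (wt P S A (insert x T)) (wt P S A T)" unfolding wt_def by simp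
qed

lemma min_mult: "(a::nat) * b \<le> (a + b) * min a b"
  by (cases "a \<le> b") (auto simp: algebra_simps min_def)

lemma class_bound:
  assumes finX: "finite X" and finC: "finite C"
    and sub: "\<forall>y\<in>C. S y \<subseteq> X"
    and tr: "\<forall>y\<in>C. S y \<inter> I = T"
    and sep: "\<forall>y\<in>C. \<forall>y'\<in>C. y \<noteq> y' \<longrightarrow> \<delta> < card ((S y - S y') \<union> (S y' - S y))"
  shows "(\<delta> + 1) * (card C - 1) \<le> 2 * (\<Sum>x\<in>X - I. min (card {y\<in>C. x \<in> S y}) (card {y\<in>C. x \<notin> S y}))"
proof -
  let ?s = "card C"
  let ?a = "\<lambda>x. card {y\<in>C. x \<in> S y}"
  let ?b = "\<lambda>x. card {y\<in>C. x \<notin> S y}"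
  have ab: "?a x + ?b x = ?s" for x
  proof -
    have "{y\<in>C. x \<in> S y} \<union> {y\<in>C. x \<notin> S y} = C" by auto
    moreover have "{y\<in>C. x \<in> S y} \<inter> {y\<in>C. x \<notin> S y} = {}" by auto
    ultimately show ?thesis using finC card_Un_disjoint[of "{y\<in>C. x \<in> S y}" "{y\<in>C. x \<notin> S y}"] by auto
  qed
  have prod: "?a x * ?b x = (\<Sum>y\<in>C. \<Sum>y'\<in>C. if x \<in> S y \<and> x \<notin> S y' then 1 else 0)" for x
  proof -
    have "?a x * ?b x = (\<Sum>y\<in>C. if x \<in> S y then 1 else 0) * (\<Sum>y'\<in>C. if x \<notin> S y' then 1 else 0)"
      using cnt[OF finC] by simp
    also have "\<dots> = (\<Sum>y\<in>C. \<Sum>y'\<in>C. (if x \<in> S y then 1 else 0) * (if x \<notin> S y' then 1 else 0))"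
      by (rule sum_product)
    also have "\<dots> = (\<Sum>y\<in>C. \<Sum>y'\<in>C. if x \<in> S y \<and> x \<notin> S y' then 1 else 0)"
      by (intro sum.cong refl) auto
    finally show ?thesis .
  qed
  have diffeq: "{x\<in>X - I. x \<in> S y \<and> x \<notin> S y'} = S y - S y'" if "y \<in> C" "y' \<in> C" for y y'
  proof -
    have "S y \<inter> I = S y' \<inter> I" using tr that by auto
    thus ?thesis using sub that by blast
  qed
  have "(\<Sum>x\<in>X - I. ?a x * ?b x) = (\<Sum>x\<in>X - I. \<Sum>y\<in>C. \<Sum>y'\<in>C. if x \<in> S y \<and> x \<notin> S y' then 1 else 0)"
    using prod by simp
  also have "\<dots> = (\<Sum>y\<in>C. \<Sum>x\<in>X - I. \<Sum>y'\<in>C. if x \<in> S y \<and> x \<notin> S y' then 1 else 0)"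
    by (rule sum.swap)
  also have "\<dots> = (\<Sum>y\<in>C. \<Sum>y'\<in>C. \<Sum>x\<in>X - I. if x \<in> S y \<and> x \<notin> S y' then 1 else 0)"
    by (intro sum.cong refl sum.swap)
  also have "\<dots> = (\<Sum>y\<in>C. \<Sum>y'\<in>C. card (S y - S y'))"
  proof (intro sum.cong refl)
    fix y y' assume "y \<in> C" "y' \<in> C"
    have "finite (X - I)" using finX by simp
    from cnt[OF this, of "\<lambda>x. x \<in> S y \<and> x \<notin> S y'"] diffeq[OF \<open>y \<in> C\<close> \<open>y' \<in> C\<close>]
    show "(\<Sum>x\<in>X - I. if x \<in> S y \<and> x \<notin> S y' then 1 else 0) = card (S y - S y')" by simp
  qed
  finally have e1: "(\<Sum>x\<in>X - I. ?a x * ?b x) = (\<Sum>y\<in>C. \<Sum>y'\<in>C. card (S y - S y'))" .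
  have e2: "(\<Sum>y\<in>C. \<Sum>y'\<in>C. card (S y - S y')) = (\<Sum>y\<in>C. \<Sum>y'\<in>C. card (S y' - S y))"
    by (rule sum.swap)
  have "?s * ((\<delta> + 1) * (?s - 1)) = (\<Sum>y\<in>C. \<Sum>y'\<in>C. if y = y' then 0 else \<delta> + 1)"
  proof -
    have "(\<Sum>y'\<in>C. if y = y' then 0 else \<delta> + 1) = (\<delta> + 1) * (?s - 1)" if "y \<in> C" for y
    proof -
      have "(\<Sum>y'\<in>C. if y = y' then 0 else \<delta> + 1) = (\<Sum>y'\<in>C - {y}. \<delta> + 1)"
        using finC that by (simp add: sum.If_cases Diff_eq Compl_eq Int_commute)
      also have "\<dots> = (\<delta> + 1) * (?s - 1)" using finC that by simp
      finally show ?thesis .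
    qed
    hence "(\<Sum>y\<in>C. \<Sum>y'\<in>C. if y = y' then 0 else \<delta> + 1) = (\<Sum>y\<in>C. (\<delta> + 1) * (?s - 1))"
      by (intro sum.cong refl) auto
    thus ?thesis by simp
  qed
  also have "\<dots> \<le> (\<Sum>y\<in>C. \<Sum>y'\<in>C. card (S y - S y') + card (S y' - S y))"
  proof (intro sum_mono)
    fix y y' assume "y \<in> C" "y' \<in> C"
    show "(if y = y' then 0 else \<delta> + 1) \<le> card (S y - S y') + card (S y' - S y)"
    proof (cases "y = y'")
      case False
      have "finite (S y)" "finite (S y')" using sub finX \<open>y \<in> C\<close> \<open>y' \<in> C\<close> finite_subset by blast+
      hence "card ((S y - S y') \<union> (S y' - S y)) = card (S y - S y') + card (S y' - S y)"
        by (intro card_Un_disjoint) auto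
      thus ?thesis using sep \<open>y \<in> C\<close> \<open>y' \<in> C\<close> False by fastforce
    qed simp
  qed
  also have "\<dots> = 2 * (\<Sum>x\<in>X - I. ?a x * ?b x)"
  proof -
    have "(\<Sum>y\<in>C. \<Sum>y'\<in>C. card (S y - S y') + card (S y' - S y)) =
      (\<Sum>y\<in>C. \<Sum>y'\<in>C. card (S y - S y')) + (\<Sum>y\<in>C. \<Sum>y'\<in>C. card (S y' - S y))"
      by (simp only: sum.distrib)
    thus ?thesis by (simp only: e1[symmetric] e2[symmetric] mult_2)
  qed
  also have "\<dots> \<le> 2 * (\<Sum>x\<in>X - I. ?s * min (?a x) (?b x))"
  proof (intro mult_left_mono sum_mono)
    fix x show "?a x * ?b x \<le> ?s * min (?a x) (?b x)" using min_mult[of "?a x" "?b x"] ab[of x] by simp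
  qed simp
  also have "\<dots> = ?s * (2 * (\<Sum>x\<in>X - I. min (?a x) (?b x)))"
    by (simp add: sum_distrib_left mult.left_commute)
  finally have "?s * ((\<delta> + 1) * (?s - 1)) \<le> ?s * (2 * (\<Sum>x\<in>X - I. min (?a x) (?b x)))" .
  thus ?thesis by (cases "?s = 0") auto
qed

lemma lower:
  assumes finX: "finite X" and finP: "finite P"
    and sub: "\<forall>y\<in>P. S y \<subseteq> X"
    and sep: "\<forall>y\<in>P. \<forall>y'\<in>P. y \<noteq> y' \<longrightarrow> \<delta> < card ((S y - S y') \<union> (S y' - S y))"
    and IX: "I \<subseteq> X"
  shows "(\<delta> + 1) * (card P - card ((\<lambda>y. S y \<inter> I) ` P)) \<le> 2 * (\<Sum>x\<in>X - I. gsum P S I x)"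
proof -
  define C where "C T = {y\<in>P. S y \<inter> I = T}" for T
  have finI: "finite I" using IX finX finite_subset by auto
  have finC: "finite (C T)" for T unfolding C_def using finP by simp
  have "(\<Sum>x\<in>X - I. gsum P S I x) =
     (\<Sum>x\<in>X - I. \<Sum>T\<in>Pow I. min (card {y\<in>C T. x \<in> S y}) (card {y\<in>C T. x \<notin> S y}))"
  proof -
    have e1: "{y\<in>P. S y \<inter> I = T \<and> x \<in> S y} = {y\<in>C T. x \<in> S y}" for T x unfolding C_def by auto
    have e2: "{y\<in>P. S y \<inter> I = T \<and> x \<notin> S y} = {y\<in>C T. x \<notin> S y}" for T x unfolding C_def by auto
    show ?thesis unfolding gsum_def e1 e2 ..
  qed
  also have "\<dots> = (\<Sum>T\<in>Pow I. \<Sum>x\<in>X - I. min (card {y\<in>C T. x \<in> S y}) (card {y\<in>C T. x \<notin> S y}))"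
    by (rule sum.swap)
  finally have g: "2 * (\<Sum>x\<in>X - I. gsum P S I x) =
     (\<Sum>T\<in>Pow I. 2 * (\<Sum>x\<in>X - I. min (card {y\<in>C T. x \<in> S y}) (card {y\<in>C T. x \<notin> S y})))"
    by (simp add: sum_distrib_left)
  have cb: "(\<delta> + 1) * (card (C T) - 1) \<le> 2 * (\<Sum>x\<in>X - I. min (card {y\<in>C T. x \<in> S y}) (card {y\<in>C T. x \<notin> S y}))" for T
  proof (rule class_bound[OF finX finC])
    show "\<forall>y\<in>C T. S y \<subseteq> X" using sub unfolding C_def by auto
    show "\<forall>y\<in>C T. S y \<inter> I = T" unfolding C_def by auto
    show "\<forall>y\<in>C T. \<forall>y'\<in>C T. y \<noteq> y' \<longrightarrow> \<delta> < card ((S y - S y') \<union> (S y' - S y))"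
      using sep unfolding C_def by auto
  qed
  have cP: "card P = (\<Sum>T\<in>Pow I. card (C T))"
    using wt_sum[OF finP finI, of S] unfolding wt_def C_def by simp
  have cI: "card ((\<lambda>y. S y \<inter> I) ` P) = (\<Sum>T\<in>Pow I. if C T \<noteq> {} then 1 else 0)"
  proof -
    have "(\<lambda>y. S y \<inter> I) ` P = {T\<in>Pow I. C T \<noteq> {}}" unfolding C_def by auto
    thus ?thesis using cnt[of "Pow I" "\<lambda>T. C T \<noteq> {}"] finI by simp
  qed
  have "card P \<le> (\<Sum>T\<in>Pow I. (card (C T) - 1) + (if C T \<noteq> {} then 1 else 0))"
    unfolding cP by (intro sum_mono) (auto simp: finC)
  also have "\<dots> = (\<Sum>T\<in>Pow I. card (C T) - 1) + card ((\<lambda>y. S y \<inter> I) ` P)"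
    unfolding cI by (simp add: sum.distrib)
  finally have "card P - card ((\<lambda>y. S y \<inter> I) ` P) \<le> (\<Sum>T\<in>Pow I. card (C T) - 1)" by simp
  hence "(\<delta> + 1) * (card P - card ((\<lambda>y. S y \<inter> I) ` P)) \<le> (\<Sum>T\<in>Pow I. (\<delta> + 1) * (card (C T) - 1))"
    unfolding sum_distrib_left[symmetric] by (rule mult_left_mono) simp
  also have "\<dots> \<le> 2 * (\<Sum>x\<in>X - I. gsum P S I x)"
    unfolding g using cb by (intro sum_mono) auto
  finally show ?thesis .
qed



lemma dc:
  assumes finX: "finite X"
  shows "(\<Sum>A\<in>{A. A \<subseteq> X \<and> card A = Suc j}. \<Sum>x\<in>A. f (A - {x}) x) =
         (\<Sum>I\<in>{I. I \<subseteq> X \<and> card I = j}. \<Sum>x\<in>X - I. f I x)"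
proof -
  let ?AA = "{A. A \<subseteq> X \<and> card A = Suc j}"
  let ?II = "{I. I \<subseteq> X \<and> card I = j}"
  have "?AA \<subseteq> Pow X" "?II \<subseteq> Pow X" by auto
  hence fA: "finite ?AA" and fI: "finite ?II" using finX finite_subset by (metis finite_Pow_iff)+
  have "(\<Sum>A\<in>?AA. \<Sum>x\<in>A. f (A - {x}) x) = (\<Sum>(A, x)\<in>Sigma ?AA (\<lambda>A. A). f (A - {x}) x)"
    using fA finX by (intro sum.Sigma) (auto intro: finite_subset)
  also have "\<dots> = (\<Sum>(I, x)\<in>Sigma ?II (\<lambda>I. X - I). f I x)"
  proof (rule sum.reindex_bij_witness[where i = "\<lambda>(I, x). (insert x I, x)" and j = "\<lambda>(A, x). (A - {x}, x)"])
    fix a assume "a \<in> Sigma ?AA (\<lambda>A. A)"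
    then obtain A x where a: "a = (A, x)" "A \<subseteq> X" "card A = Suc j" "x \<in> A" by auto
    have "finite A" using a finX finite_subset by auto
    hence "card (A - {x}) = j" using a by simp
    thus "(\<lambda>(I, x). (insert x I, x)) ((\<lambda>(A, x). (A - {x}, x)) a) = a"
      "(\<lambda>(A, x). (A - {x}, x)) a \<in> Sigma ?II (\<lambda>I. X - I)" using a by auto
    show "(case (\<lambda>(A, x). (A - {x}, x)) a of (I, x) \<Rightarrow> f I x) = (case a of (A, x) \<Rightarrow> f (A - {x}) x)"
      using a by simp
  next
    fix b assume "b \<in> Sigma ?II (\<lambda>I. X - I)"
    then obtain I x where b: "b = (I, x)" "I \<subseteq> X" "card I = j" "x \<in> X" "x \<notin> I" by auto
    have "finite I" using b finX finite_subset by auto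
    hence "card (insert x I) = Suc j" using b by simp
    thus "(\<lambda>(A, x). (A - {x}, x)) ((\<lambda>(I, x). (insert x I, x)) b) = b"
      "(\<lambda>(I, x). (insert x I, x)) b \<in> Sigma ?AA (\<lambda>A. A)" using b by auto
  qed
  also have "\<dots> = (\<Sum>I\<in>?II. \<Sum>x\<in>X - I. f I x)"
    using fI finX by (intro sum.Sigma[symmetric]) auto
  finally show ?thesis .
qed

lemma sq_le_pow: "4 \<le> b \<Longrightarrow> b * b \<le> (2::nat) ^ b"
proof (induction b rule: dec_induct)
  case base thus ?case by simp
next
  case (step n)
  have "Suc n * Suc n = n * n + 2 * n + 1" by simp
  also have "\<dots> \<le> n * n + n * n"
  proof -
    have "4 * n \<le> n * n" using step(1) by (rule mult_le_mono1)
    thus ?thesis using step(1) by linarith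
  qed
  also have "\<dots> \<le> 2 ^ n + 2 ^ n" using step(3) by simp
  finally show ?case by simp
qed

lemma pow_big: "4 * r < b \<Longrightarrow> r * b < (2::nat) ^ b"
proof -
  assume a: "4 * r < b"
  show ?thesis
  proof (cases "r = 0")
    case True thus ?thesis by simp
  next
    case False
    hence "4 \<le> b" using a by simp
    have "r < b" using a by simp
    hence "r * b < b * b" using a by simp
    also have "\<dots> \<le> 2 ^ b" using sq_le_pow[OF \<open>4 \<le> b\<close>] .
    finally show ?thesis .
  qed
qed

lemma vc_bound:
  assumes shat: "\<forall>A\<subseteq>X. A \<noteq> {} \<longrightarrow> card ((\<lambda>y. S y \<inter> A) ` P) \<le> r * card A"
    and finX: "finite X" and AX: "A \<subseteq> X" and BA: "B \<subseteq> A"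
    and sh: "shatters ((\<lambda>y. S y \<inter> A) ` P) B"
  shows "card B \<le> 4 * r"
proof (rule ccontr)
  assume "\<not> card B \<le> 4 * r"
  hence big: "4 * r < card B" by simp
  hence "B \<noteq> {}" by auto
  have "B \<subseteq> X" using BA AX by auto
  hence finB: "finite B" using finX by (rule finite_subset)
  have "Pow B \<subseteq> (\<lambda>y. S y \<inter> B) ` P"
  proof
    fix C assume "C \<in> Pow B"
    hence "\<exists>T\<in>(\<lambda>y. S y \<inter> A) ` P. T \<inter> B = C" using sh unfolding shatters_def by auto
    then obtain y where "y \<in> P" "(S y \<inter> A) \<inter> B = C" by auto
    moreover have "(S y \<inter> A) \<inter> B = S y \<inter> B" using BA by auto
    ultimately show "C \<in> (\<lambda>y. S y \<inter> B) ` P" by auto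
  qed
  moreover have "finite ((\<lambda>y. S y \<inter> B) ` P)"
  proof (rule finite_subset)
    show "(\<lambda>y. S y \<inter> B) ` P \<subseteq> Pow B" by auto
  qed (use finB in simp)
  ultimately have "card (Pow B) \<le> card ((\<lambda>y. S y \<inter> B) ` P)" by (rule card_mono[rotated])
  also have "\<dots> \<le> r * card B" using shat AX BA \<open>B \<noteq> {}\<close> by auto
  finally have "2 ^ card B \<le> r * card B" using finB by (simp add: card_Pow)
  thus False using pow_big[OF big] by simp
qed

lemma core:
  assumes finX: "finite X" and finP: "finite P"
    and sub: "\<forall>y\<in>P. S y \<subseteq> X"
    and sep: "\<forall>y\<in>P. \<forall>y'\<in>P. y \<noteq> y' \<longrightarrow> \<delta> < card ((S y - S y') \<union> (S y' - S y))"
    and shat: "\<forall>A\<subseteq>X. A \<noteq> {} \<longrightarrow> card ((\<lambda>y. S y \<inter> A) ` P) \<le> r * card A"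
    and r: "r > 0" and k2: "card P \<ge> 2"
  shows "(\<delta> + 1) * card P < 32 * r * r * card X"
proof -
  define k where "k = card P"
  define n where "n = card X"
  define j where "j = k div (2 * r)"
  define AA where "AA = {A. A \<subseteq> X \<and> card A = Suc j}"
  define II where "II = {I. I \<subseteq> X \<and> card I = j}"
  have "AA \<subseteq> Pow X" "II \<subseteq> Pow X" unfolding AA_def II_def by auto
  hence fA: "finite AA" and fI: "finite II" using finX finite_subset by (metis finite_Pow_iff)+
  have Pne: "P \<noteq> {}" using k2 by auto
  have kpos: "k > 0" using k2 unfolding k_def by simp
  have inj: "inj_on (\<lambda>y. S y \<inter> X) P"
  proof (rule inj_onI)
    fix y y' assume yy: "y \<in> P" "y' \<in> P" "S y \<inter> X = S y' \<inter> X"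
    hence "S y = S y'" using sub by auto
    hence "card ((S y - S y') \<union> (S y' - S y)) = 0" by simp
    thus "y = y'" using sep yy by fastforce
  qed
  have Xne: "X \<noteq> {}"
  proof
    assume "X = {}"
    hence "(\<lambda>y. S y \<inter> X) ` P \<subseteq> {{}}" by auto
    hence "card ((\<lambda>y. S y \<inter> X) ` P) \<le> 1" by (metis card.empty card.insert empty_iff finite.intros(1) card_mono finite_insert le_zero_eq One_nat_def)
    thus False using card_image[OF inj] k2 by simp
  qed
  have kn: "k \<le> r * n"
    using card_image[OF inj] shat Xne unfolding k_def n_def by (metis order_refl)
  have jk: "2 * r * j \<le> k" unfolding j_def by (metis div_times_less_eq_dividend mult.commute)
  have jn: "j \<le> n"
  proof -
    have "2 * r * j \<le> r * n" using le_trans[OF jk kn] .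
    hence "r * (2 * j) \<le> r * n" by (simp add: algebra_simps)
    hence "2 * j \<le> n" using r by simp
    thus ?thesis by simp
  qed
  have kj: "k < 2 * r * Suc j"
  proof -
    have "k = 2 * r * j + k mod (2 * r)" unfolding j_def by simp
    moreover have "k mod (2 * r) < 2 * r" using r by simp
    ultimately show ?thesis by simp
  qed
  obtain I0 where "I0 \<subseteq> X" "card I0 = j" using obtain_subset_with_card_n[of j X] jn unfolding n_def by metis
  hence "I0 \<in> II" unfolding II_def by simp
  hence IIpos: "card II > 0" using fI card_gt_0_iff by blast
  have up: "(\<Sum>x\<in>A. gsum P S (A - {x}) x) \<le> 4 * r * k" if "A \<in> AA" for A
  proof -
    have AX: "A \<subseteq> X" using that unfolding AA_def by simp
    hence finA: "finite A" using finX by (rule finite_subset)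
    have "(\<Sum>x\<in>A. gsum P S (A - {x}) x) = (\<Sum>x\<in>A. \<Sum>T\<in>Pow (A - {x}). min (wt P S A (insert x T)) (wt P S A T))"
      by (intro sum.cong refl) (erule gsum_wt)
    also have "\<dots> \<le> 4 * r * k" unfolding k_def
    proof (rule upper[OF finP finA])
      show "\<forall>B\<subseteq>A. shatters ((\<lambda>y. S y \<inter> A) ` P) B \<longrightarrow> card B \<le> 4 * r"
        using vc_bound[OF shat finX AX] by blast
    qed
    finally show ?thesis .
  qed
  have lo: "(\<delta> + 1) * k \<le> 4 * (\<Sum>x\<in>X - I. gsum P S I x)" if "I \<in> II" for I
  proof -
    have IX: "I \<subseteq> X" and cI: "card I = j" using that unfolding II_def by auto
    define c where "c = card ((\<lambda>y. S y \<inter> I) ` P)"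
    have l: "(\<delta> + 1) * (k - c) \<le> 2 * (\<Sum>x\<in>X - I. gsum P S I x)"
      using lower[OF finX finP sub sep IX] unfolding k_def c_def .
    have c2: "2 * c \<le> k"
    proof (cases "I = {}")
      case True
      hence "(\<lambda>y. S y \<inter> I) ` P = {{}}" using Pne by auto
      hence "c = 1" unfolding c_def by simp
      thus ?thesis using k2 unfolding k_def by simp
    next
      case False
      hence "c \<le> r * j" using shat IX cI unfolding c_def by auto
      thus ?thesis using jk by simp
    qed
    have "(\<delta> + 1) * k \<le> (\<delta> + 1) * (2 * (k - c))" using c2 by (intro mult_left_mono) auto
    also have "\<dots> = 2 * ((\<delta> + 1) * (k - c))" by simp
    also have "\<dots> \<le> 4 * (\<Sum>x\<in>X - I. gsum P S I x)" using l by simp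
    finally show ?thesis .
  qed
  have "card II * ((\<delta> + 1) * k) = (\<Sum>I\<in>II. (\<delta> + 1) * k)" by simp
  also have "\<dots> \<le> (\<Sum>I\<in>II. 4 * (\<Sum>x\<in>X - I. gsum P S I x))" using lo by (rule sum_mono)
  also have "\<dots> = 4 * (\<Sum>I\<in>II. \<Sum>x\<in>X - I. gsum P S I x)" by (simp add: sum_distrib_left)
  also have "\<dots> = 4 * (\<Sum>A\<in>AA. \<Sum>x\<in>A. gsum P S (A - {x}) x)"
    unfolding AA_def II_def using dc[OF finX, where j=j and f="gsum P S"] by simp
  also have "\<dots> \<le> 4 * (\<Sum>A\<in>AA. 4 * r * k)" using up by (intro mult_left_mono sum_mono) auto
  also have "\<dots> = 16 * r * k * card AA" by simp
  finally have main: "card II * ((\<delta> + 1) * k) \<le> 16 * r * k * card AA" .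
  have cnt2: "card AA * Suc j = card II * (n - j)"
  proof -
    have "card AA * Suc j = (\<Sum>A\<in>AA. \<Sum>x\<in>A. (1::nat))"
      unfolding AA_def by simp
    also have "\<dots> = (\<Sum>I\<in>II. \<Sum>x\<in>X - I. (1::nat))"
      unfolding AA_def II_def using dc[OF finX, where j=j and f="\<lambda>_ _. (1::nat)"] by simp
    also have "\<dots> = (\<Sum>I\<in>II. n - j)"
    proof (intro sum.cong refl)
      fix I assume "I \<in> II"
      hence "I \<subseteq> X" "card I = j" unfolding II_def by auto
      thus "(\<Sum>x\<in>X - I. (1::nat)) = n - j" unfolding n_def using finX
        by (simp add: card_Diff_subset finite_subset)
    qed
    also have "\<dots> = card II * (n - j)" by simp
    finally show ?thesis .
  qed
  have "card II * k * ((\<delta> + 1) * Suc j) = card II * ((\<delta> + 1) * k) * Suc j" by (simp add: algebra_simps)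
  also have "\<dots> \<le> 16 * r * k * card AA * Suc j" using main by (rule mult_right_mono) simp
  also have "\<dots> = 16 * r * k * (card AA * Suc j)" by (simp only: mult.assoc)
  also have "\<dots> = 16 * r * k * (card II * (n - j))" by (simp only: cnt2)
  also have "\<dots> \<le> 16 * r * k * (card II * n)" by (intro mult_left_mono) auto
  also have "\<dots> = card II * k * (16 * r * n)" by (simp add: algebra_simps)
  finally have "card II * k * ((\<delta> + 1) * Suc j) \<le> card II * k * (16 * r * n)" .
  moreover have "card II * k > 0" using IIpos kpos by simp
  ultimately have "(\<delta> + 1) * Suc j \<le> 16 * r * n" by (metis mult_le_cancel1 not_gr0)
  have "(\<delta> + 1) * k < (\<delta> + 1) * (2 * r * Suc j)" using kj by (rule mult_strict_left_mono) simp
  also have "\<dots> = 2 * r * ((\<delta> + 1) * Suc j)" by (simp add: algebra_simps)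
  also have "\<dots> \<le> 2 * r * (16 * r * n)" using \<open>(\<delta> + 1) * Suc j \<le> 16 * r * n\<close> by (intro mult_left_mono) auto
  also have "\<dots> = 32 * r * r * n" by simp
  finally show ?thesis unfolding k_def n_def .
qed



lemma nc_ge:
  assumes finV: "finite V" and AV: "A \<subseteq> V"
  shows "card ((\<lambda>v. nbhd E v \<inter> A) ` V) \<le> nbhd_complexity V E (card A)"
proof -
  let ?M = "{card ((\<lambda>v. nbhd E v \<inter> A) ` V) | A. A \<subseteq> V \<and> card A = card A} \<union> {0}"
  let ?N = "{card ((\<lambda>v. nbhd E v \<inter> B) ` V) | B. B \<subseteq> V \<and> card B = card A} \<union> {0}"
  have "{card ((\<lambda>v. nbhd E v \<inter> B) ` V) | B. B \<subseteq> V \<and> card B = card A} \<subseteq> (\<lambda>B. card ((\<lambda>v. nbhd E v \<inter> B) ` V)) ` Pow V"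
    by auto
  hence fin: "finite ?N" using finV by (meson finite_Pow_iff finite_Un finite_imageI finite_insert finite.emptyI finite_subset)
  have "card ((\<lambda>v. nbhd E v \<inter> A) ` V) \<in> ?N" using AV by blast
  hence "card ((\<lambda>v. nbhd E v \<inter> A) ` V) \<le> Max ?N" using fin by (rule Max_ge[rotated])
  thus ?thesis unfolding nbhd_complexity_def .
qed

theorem lemma3p1:
  fixes r l :: nat
  assumes "r > 0" and "l > 0"
  shows "\<exists>\<delta>::nat. \<forall>(V::'a set) E X Y.
     bipartite_graph V E X Y \<longrightarrow>
     (\<forall>x\<in>X. \<forall>x'\<in>X. x \<noteq> x' \<longrightarrow> \<not> twins E x x') \<longrightarrow>
     (\<forall>m::nat. m > 0 \<longrightarrow> nbhd_complexity V E m \<le> r * m) \<longrightarrow>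
     (\<forall>Y'. Y' \<subseteq> Y \<and> card Y' \<ge> 2 \<and> real (card Y') \<ge> real (card Y) / real l \<longrightarrow>
        (\<exists>u\<in>Y'. \<exists>v\<in>Y'. u \<noteq> v \<and> near_twins E \<delta> u v))"
proof (intro exI[of _ "32 * r * r * r * l"] allI impI)
  define \<delta> where "\<delta> = 32 * r * r * r * l"
  fix V :: "'a set" and E X Y Y'
  assume bip: "bipartite_graph V E X Y"
    and notw: "\<forall>x\<in>X. \<forall>x'\<in>X. x \<noteq> x' \<longrightarrow> \<not> twins E x x'"
    and cx: "\<forall>m::nat. m > 0 \<longrightarrow> nbhd_complexity V E m \<le> r * m"
    and Y': "Y' \<subseteq> Y \<and> card Y' \<ge> 2 \<and> real (card Y') \<ge> real (card Y) / real l"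
  have finV: "finite V" and eV: "\<forall>u v. E u v \<longrightarrow> u \<in> V \<and> v \<in> V \<and> u \<noteq> v \<and> E v u"
    and XY: "X \<union> Y = V" "X \<inter> Y = {}"
    and eXY: "\<forall>u v. E u v \<longrightarrow> (u \<in> X \<and> v \<in> Y) \<or> (u \<in> Y \<and> v \<in> X)"
    using bip unfolding bipartite_graph_def by auto
  have finX: "finite X" and finY: "finite Y" using finV XY by auto
  have Y'Y: "Y' \<subseteq> Y" and k2: "card Y' \<ge> 2" and rl: "real (card Y) / real l \<le> real (card Y')" using Y' by auto
  have finY': "finite Y'" using Y'Y finY finite_subset by auto
  have Yne: "Y \<noteq> {}" using Y'Y k2 by auto
  show "\<exists>u\<in>Y'. \<exists>v\<in>Y'. u \<noteq> v \<and> near_twins E (32 * r * r * r * l) u v"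
  proof (rule ccontr)
    assume nn: "\<not> (\<exists>u\<in>Y'. \<exists>v\<in>Y'. u \<noteq> v \<and> near_twins E (32 * r * r * r * l) u v)"
    have sep: "\<forall>y\<in>Y'. \<forall>y'\<in>Y'. y \<noteq> y' \<longrightarrow> \<delta> < card ((nbhd E y - nbhd E y') \<union> (nbhd E y' - nbhd E y))"
      using nn unfolding near_twins_def \<delta>_def by (auto simp: not_le)
    have sub: "\<forall>y\<in>Y'. nbhd E y \<subseteq> X"
    proof (intro ballI subsetI)
      fix y u assume "y \<in> Y'" "u \<in> nbhd E y"
      hence "y \<in> Y" "E y u" using Y'Y unfolding nbhd_def by auto
      thus "u \<in> X" using eXY XY(2) by blast
    qed
    have shat: "\<forall>A\<subseteq>X. A \<noteq> {} \<longrightarrow> card ((\<lambda>y. nbhd E y \<inter> A) ` Y') \<le> r * card A"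
    proof (intro allI impI)
      fix A assume A: "A \<subseteq> X" "A \<noteq> {}"
      have AV: "A \<subseteq> V" using A XY by auto
      have "card ((\<lambda>y. nbhd E y \<inter> A) ` Y') \<le> card ((\<lambda>v. nbhd E v \<inter> A) ` V)"
        using Y'Y XY finV by (intro card_mono) auto
      also have "\<dots> \<le> nbhd_complexity V E (card A)" by (rule nc_ge[OF finV AV])
      also have "\<dots> \<le> r * card A" using cx A finX finite_subset card_gt_0_iff by (metis infinite_super)
      finally show "card ((\<lambda>y. nbhd E y \<inter> A) ` Y') \<le> r * card A" .
    qed
    have c: "(\<delta> + 1) * card Y' < 32 * r * r * card X"
      by (rule core[OF finX finY' sub sep shat \<open>r > 0\<close> k2])
    have nX: "card X \<le> r * card Y"
    proof -
      have subY: "nbhd E x \<subseteq> Y" if "x \<in> X" for x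
      proof
        fix u assume "u \<in> nbhd E x"
        hence "E x u" unfolding nbhd_def by auto
        thus "u \<in> Y" using eXY XY(2) that by blast
      qed
      have inj: "inj_on (\<lambda>x. nbhd E x \<inter> Y) X"
      proof (rule inj_onI)
        fix x x' assume "x \<in> X" "x' \<in> X" "nbhd E x \<inter> Y = nbhd E x' \<inter> Y"
        hence "twins E x x'" unfolding twins_def using subY by (metis inf.absorb1)
        thus "x = x'" using notw \<open>x \<in> X\<close> \<open>x' \<in> X\<close> by blast
      qed
      have YV: "Y \<subseteq> V" using XY by auto
      have "card X = card ((\<lambda>x. nbhd E x \<inter> Y) ` X)" using card_image[OF inj] by simp
      also have "\<dots> \<le> card ((\<lambda>v. nbhd E v \<inter> Y) ` V)"
        using XY finV by (intro card_mono) auto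
      also have "\<dots> \<le> nbhd_complexity V E (card Y)" by (rule nc_ge[OF finV YV])
      also have "\<dots> \<le> r * card Y" using cx Yne finY card_gt_0_iff by metis
      finally show ?thesis .
    qed
    have nY: "card Y \<le> l * card Y'"
    proof -
      have "real (card Y) \<le> real (card Y') * real l" using rl \<open>l > 0\<close> by (simp add: divide_le_eq)
      hence "real (card Y) \<le> real (l * card Y')" by (simp add: mult.commute)
      thus ?thesis by linarith
    qed
    have "32 * r * r * card X \<le> 32 * r * r * (r * (l * card Y'))"
      using le_trans[OF nX mult_le_mono2[OF nY]] by (intro mult_le_mono2)
    also have "\<dots> = \<delta> * card Y'" unfolding \<delta>_def by (simp add: algebra_simps)
    finally have "(\<delta> + 1) * card Y' < \<delta> * card Y'" using c by linarith
    thus False by simp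
  qed
qed

end
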